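(* Let $\tau_i$ be an HC task that switches to HC mode at time $t_i\le t$, and suppose $t-t_i<D_i-D_i^L$. Then no job of $\tau_i$ can generate a demand of $C_i^H$ time units in the interval $[0,t)$. Consequently, $\tau_i$ generates maximal demand during $[0,t)$ when its first job is released at time $0$ and all successive jobs are released as soon as possible (i.e. at times $kT_i$, $k=0,1,2,\dots$).
   Context: A mixed-criticality sporadic task is $\tau_i=(T_i,L_i,\{C_i^L,C_i^H\},D_i)$: jobs are released with minimum separation $T_i$, $L_i\in\{LC,HC\}$, $D_i\le T_i$ is the relative deadline, and $C_i^L<C_i^H$ for HC tasks. Each task has a tightened deadline $D_i^L\le D_i$. An HC task is in LC mode until the instant $t_i$ at which some job requests to execute for more than $C_i^L$; from then on it is in HC mode. While in LC mode, a job released at $r$ must receive $C_i^L$ time units by $r+D_i^L$; once the task is in HC mode, a job may require up to $C_i^H$ units in total, to be received by its actual deadline $r+D_i$ (in particular a job can require $C_i^H$ only if it has not completed its LC-mode obligation before $t_i$, i.e. $r+D_i^L\ge t_i$). The demand of a task during $[0,t)$ is the amount of execution that must be completed within $[0,t)$ in order to meet all of its deadlines that fall in $[0,t)$; execution with deadline after $t$ contributes no demand. "Maximal demand" is over all legal release sequences (minimum separation $T_i$) and all legal execution behaviours. *)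

theory Defs
  imports Main "HOL.Real"
begin

text \<open>An HC task tau_i with period T, relative deadline D, tightened deadline DL,
  budgets CL < CH.  Time is real-valued.  Finite release
  sequences are covered since later jobs may be released arbitrarily late.\<close>

definition legal_release :: "real \<Rightarrow> (nat \<Rightarrow> real) \<Rightarrow> bool" where
  "legal_release T r \<longleftrightarrow> 0 \<le> r 0 \<and> (\<forall>k. r k + T \<le> r (Suc k))"

text \<open>An execution behaviour c gives the total execution requested by each job.\<close>

definition legal_behaviour ::
  "real \<Rightarrow> real \<Rightarrow> real \<Rightarrow> real \<Rightarrow> (nat \<Rightarrow> real) \<Rightarrow> (nat \<Rightarrow> real) \<Rightarrow> bool" where
  "legal_behaviour DL CL CH ti r c \<longleftrightarrow>
     (\<forall>k. 0 \<le> c k \<and> c k \<le> CH \<and> (r k + DL < ti \<longrightarrow> c k \<le> CL))"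

definition job_demand ::
  "real \<Rightarrow> real \<Rightarrow> real \<Rightarrow> (nat \<Rightarrow> real) \<Rightarrow> (nat \<Rightarrow> real) \<Rightarrow> real \<Rightarrow> nat \<Rightarrow> real" where
  "job_demand D DL ti r c t k =
     (if r k + DL < ti then (if r k + DL \<le> t then c k else 0)
      else (if r k + D \<le> t then c k else 0))"

definition task_demand ::
  "real \<Rightarrow> real \<Rightarrow> real \<Rightarrow> (nat \<Rightarrow> real) \<Rightarrow> (nat \<Rightarrow> real) \<Rightarrow> real \<Rightarrow> real" where
  "task_demand D DL ti r c t = (\<Sum>k\<in>{k. r k < t}. job_demand D DL ti r c t k)"

end

theory Submission
  imports Defs
begin

lemma rel_ge:
  assumes "legal_release T r" shows "real k * T \<le> r k"
proof (induction k)
  case 0 then show ?case using assms by (simp add: legal_release_def)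
next
  case (Suc k)
  have "r k + T \<le> r (Suc k)" using assms by (simp add: legal_release_def)
  then show ?case using Suc by (simp add: algebra_simps)
qed

lemma fin_lt:
  assumes "0 < (T::real)" shows "finite {k. real k * T < x}"
proof -
  have "{k. real k * T < x} \<subseteq> {..nat \<lceil>x / T\<rceil>}"
  proof
    fix k assume "k \<in> {k. real k * T < x}"
    then have "real k * T < x" by simp
    then have "real k < x / T" using assms by (simp add: field_simps)
    then have "k \<le> nat \<lceil>x / T\<rceil>" by linarith
    then show "k \<in> {..nat \<lceil>x / T\<rceil>}" by simp
  qed
  then show ?thesis using finite_subset by blast
qed

theorem lemma2:
  fixes T D DL CL CH ti t :: real
  assumes "0 < T" and "0 < DL" and "DL \<le> D" and "D \<le> T"
    and "0 \<le> CL" and "CL < CH"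
    and "0 \<le> ti" and "ti \<le> t" and "t - ti < D - DL"
  shows "(\<forall>r c k. legal_release T r \<longrightarrow> legal_behaviour DL CL CH ti r c \<longrightarrow>
              job_demand D DL ti r c t k < CH)
      \<and> (\<exists>c0. legal_behaviour DL CL CH ti (\<lambda>k. real k * T) c0 \<and>
              (\<forall>r c. legal_release T r \<longrightarrow> legal_behaviour DL CL CH ti r c \<longrightarrow>
                 task_demand D DL ti r c t \<le> task_demand D DL ti (\<lambda>k. real k * T) c0 t))"
proof -
  have jd: "job_demand D DL ti r c t k = (if r k + DL < ti then c k else 0)" for r c k
    using assms unfolding job_demand_def by auto
  have td: "task_demand D DL ti r c t = (\<Sum>k\<in>{k. r k + DL < ti}. c k)"
    if fin: "finite {k. r k < t}" for r c
  proof -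
    have sub: "{k. r k + DL < ti} \<subseteq> {k. r k < t}" using assms by auto
    have "task_demand D DL ti r c t = (\<Sum>k\<in>{k. r k < t}. (if r k + DL < ti then c k else 0))"
      unfolding task_demand_def using jd by simp
    also have "\<dots> = (\<Sum>k\<in>{k. r k < t} \<inter> {k. r k + DL < ti}. c k)"
      by (simp add: sum.inter_restrict[OF fin])
    also have "{k. r k < t} \<inter> {k. r k + DL < ti} = {k. r k + DL < ti}" using sub by blast
    finally show ?thesis .
  qed
  have finr: "finite {k. r k < t}" if "legal_release T r" for r
  proof -
    have "{k. r k < t} \<subseteq> {k. real k * T < t}" using rel_ge[OF that] by (auto intro: le_less_trans)
    then show ?thesis using fin_lt[OF assms(1)] finite_subset by blast
  qed
  have sync: "legal_release T (\<lambda>k. real k * T)"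
    unfolding legal_release_def using assms by (simp add: algebra_simps)
  have P1: "\<forall>r c k. legal_release T r \<longrightarrow> legal_behaviour DL CL CH ti r c \<longrightarrow>
              job_demand D DL ti r c t k < CH"
    using assms unfolding jd legal_behaviour_def by force
  define c0 :: "nat \<Rightarrow> real" where "c0 = (\<lambda>_. CL)"
  have lb0: "legal_behaviour DL CL CH ti (\<lambda>k. real k * T) c0"
    using assms unfolding legal_behaviour_def c0_def by auto
  have P2: "task_demand D DL ti r c t \<le> task_demand D DL ti (\<lambda>k. real k * T) c0 t"
    if lr: "legal_release T r" and lb: "legal_behaviour DL CL CH ti r c" for r c
  proof -
    let ?B = "{k. r k + DL < ti}"
    let ?Sy = "{k. real k * T + DL < ti}"
    have finB0: "finite ?Sy"
    proof -
      have "?Sy \<subseteq> {k. real k * T < t}" using assms by auto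
      then show ?thesis using fin_lt[OF assms(1)] finite_subset by blast
    qed
    have subB: "?B \<subseteq> ?Sy" using rel_ge[OF lr] by (auto intro: le_less_trans add_right_mono)
    have "task_demand D DL ti r c t = (\<Sum>k\<in>?B. c k)" using td[OF finr[OF lr]] .
    also have "\<dots> \<le> (\<Sum>k\<in>?B. CL)"
      by (rule sum_mono) (use lb in \<open>auto simp: legal_behaviour_def\<close>)
    also have "\<dots> \<le> (\<Sum>k\<in>?Sy. CL)"
      by (rule sum_mono2[OF finB0 subB]) (use assms in auto)
    also have "\<dots> = task_demand D DL ti (\<lambda>k. real k * T) c0 t"
      using td[OF finr[OF sync], of c0] by (simp add: c0_def)
    finally show ?thesis .
  qed
  show ?thesis using P1 lb0 P2 by blast
qed

end
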